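(* Let $p$ be a prime and $n, k$ positive integers, $d = \gcd(n,k)$. Let $L(X) = \sum_{i=0}^t \alpha_i X^{p^i}$, $\alpha_i \in \mathbb{F}_p$, be a $p$-linearized polynomial without multiple roots, and let $L'$ be a $p$-linearized polynomial over $\mathbb{F}_p$ with $S_k^{2k}(X) = X - X^{p^k} = L \circ L'(X)$. Let $l'$ be the conventional $p$-associate of $L'$, let $w = (l', t_d^k)$, $u = l'/w$, $v = t_d^k/w$, and let $U, V$ be the linearized $p$-associates of $u, v$. Then $$U \circ L = S_d^{2d} \circ V.$$
   Context: For positive integers $l \mid k$ define $T_l^k(X) = \sum_{i=0}^{k/l - 1} X^{p^{li}}$ and $S_l^k(X) = \sum_{i=0}^{k/l-1} (-1)^i X^{p^{li}}$. For $l(X) = \sum \alpha_i X^i \in \mathbb{F}_p[X]$, its linearized $p$-associate is $\sum \alpha_i X^{p^i}$, and conversely $l$ is the conventional $p$-associate of that linearized polynomial; $t_d^k(X) = \sum_{i=0}^{k/d-1} X^{di}$ is the conventional $p$-associate of $T_d^k$. $(f,g)$ denotes the monic gcd in $\mathbb{F}_p[X]$. $\circ$ denotes composition. *)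

theory Defs
  imports "HOL-Computational_Algebra.Computational_Algebra" "HOL-Library.Cardinality"
begin

definition lin_assoc :: "nat \<Rightarrow> 'a::comm_ring_1 poly \<Rightarrow> 'a poly" where
  "lin_assoc p l = (\<Sum>i\<le>degree l. monom (coeff l i) (p ^ i))"

definition is_linearized :: "nat \<Rightarrow> 'a::comm_ring_1 poly \<Rightarrow> bool" where
  "is_linearized p L \<longleftrightarrow> (\<forall>j. coeff L j \<noteq> 0 \<longrightarrow> (\<exists>i. j = p ^ i))"

definition conv_assoc :: "nat \<Rightarrow> 'a::comm_ring_1 poly \<Rightarrow> 'a poly" where
  "conv_assoc p L = (\<Sum>i\<le>degree L. monom (coeff L (p ^ i)) i)"

definition T_lin :: "nat \<Rightarrow> nat \<Rightarrow> nat \<Rightarrow> 'a::comm_ring_1 poly" where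
  "T_lin p l k = (\<Sum>i<k div l. monom 1 (p ^ (l * i)))"

definition S_lin :: "nat \<Rightarrow> nat \<Rightarrow> nat \<Rightarrow> 'a::comm_ring_1 poly" where
  "S_lin p l k = (\<Sum>i<k div l. monom ((-1) ^ i) (p ^ (l * i)))"

definition t_conv :: "nat \<Rightarrow> nat \<Rightarrow> 'a::comm_ring_1 poly" where
  "t_conv d k = (\<Sum>i<k div d. monom 1 (d * i))"

text \<open>No multiple roots (in an algebraic closure): coprime with the formal derivative.\<close>
definition no_multiple_roots :: "'a::field poly \<Rightarrow> bool" where
  "no_multiple_roots f \<longleftrightarrow> f \<noteq> 0 \<and> coprime f (pderiv f)"

end

theory Submission imports Defs begin

lemma card_char:
  assumes "CARD('a::field) = p" "prime p"
  shows "CHAR('a) = p"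
proof -
  have fin: "finite (UNIV::'a set)" using assms by (metis card.infinite not_prime_0)
  have "(\<Sum>x\<in>(UNIV::'a set). x + 1) = (\<Sum>x\<in>UNIV. x)"
    by (rule sum.reindex_bij_witness[of _ "\<lambda>y. y - 1" "\<lambda>y. y + 1"]) auto
  then have "of_nat p = (0::'a)" using assms(1) by (simp add: sum.distrib)
  then have "CHAR('a) dvd p" by (simp add: of_nat_eq_0_iff_char_dvd)
  moreover have "prime CHAR('a)"
    using prime_CHAR_semidom finite_imp_CHAR_pos[OF fin] by blast
  ultimately show ?thesis using assms(2) by (metis prime_nat_iff prime_gt_1_nat less_irrefl)
qed

lemma card_pow:
  assumes "CARD('a::field) = p" "prime p"
  shows "(x::'a) ^ p = x"
proof (cases "x = 0")
  case False
  have fin: "finite (UNIV::'a set)" using assms by (metis card.infinite not_prime_0)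
  have "x * (\<Prod>y\<in>UNIV-{0}. x * y) = x * x ^ (card (UNIV :: 'a set) - 1) * \<Prod>(UNIV-{0})"
    using fin by (simp add: prod.distrib mult_ac)
  also have "x * x ^ (card (UNIV :: 'a set) - 1) = x ^ Suc (card (UNIV :: 'a set) - 1)"
    by (subst power_Suc) auto
  also have "Suc (card (UNIV :: 'a set) - 1) = card (UNIV :: 'a set)"
    using assms prime_gt_0_nat by auto
  also have "(\<Prod>y\<in>UNIV-{0}. x * y) = (\<Prod>y\<in>UNIV-{0}. y)"
    by (rule prod.reindex_bij_witness[of _ "\<lambda>y. y / x" "\<lambda>y. x * y"]) (use False in auto)
  finally show ?thesis
    using assms fin by simp
qed (use assms prime_gt_0_nat in auto)


lemma lin_bound:
  assumes "degree a \<le> N"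
  shows "lin_assoc p a = (\<Sum>i\<le>N. monom (coeff a i) (p ^ i))"
  unfolding lin_assoc_def
  by (rule sum.mono_neutral_left) (use assms in \<open>auto simp: coeff_eq_0\<close>)

lemma lin_add: "lin_assoc p (a + b) = lin_assoc p a + lin_assoc p b"
proof -
  let ?N = "max (degree a) (degree b)"
  have "degree (a+b) \<le> ?N" by (simp add: degree_add_le)
  then show ?thesis
    by (simp add: lin_bound[of _ ?N] lin_bound[of a ?N] lin_bound[of b ?N] sum.distrib[symmetric] add_monom)
qed

lemma smult_sum_r: "smult c (sum f A) = (\<Sum>i\<in>A. smult c (f i))"
  by (induction A rule: infinite_finite_induct) (simp_all add: smult_add_right)

lemma lin_smult: "lin_assoc p (smult c a) = smult c (lin_assoc p a)"
proof -
  have "lin_assoc p (smult c a) = (\<Sum>i\<le>degree a. monom (coeff (smult c a) i) (p ^ i))"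
    by (rule lin_bound) (simp add: degree_smult_le)
  then show ?thesis by (simp add: lin_assoc_def smult_sum_r smult_monom)
qed

lemma lin_sum: "lin_assoc p (sum f A) = (\<Sum>i\<in>A. lin_assoc p (f i))"
  by (induction A rule: infinite_finite_induct) (simp_all add: lin_add lin_assoc_def[of p 0])

lemma lin_monom: "lin_assoc p (monom c i) = monom c (p ^ i)"
proof -
  have "lin_assoc p (monom c i) = (\<Sum>j\<le>i. monom (coeff (monom c i) j) (p ^ j))"
    by (rule lin_bound) (simp add: degree_monom_le)
  also have "\<dots> = (\<Sum>j\<in>{i}. monom (coeff (monom c i) j) (p ^ j))"
    by (rule sum.mono_neutral_right) auto
  finally show ?thesis by simp
qed

lemma coeff_lin:
  assumes "p > 1"
  shows "coeff (lin_assoc p a) (p ^ i) = coeff a i"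
proof -
  let ?N = "max (degree a) i"
  have "coeff (lin_assoc p a) (p ^ i) = (\<Sum>j\<le>?N. coeff (monom (coeff a j) (p ^ j)) (p ^ i))"
    by (simp add: lin_bound[of a ?N] coeff_sum)
  also have "\<dots> = (\<Sum>j\<in>{i}. coeff (monom (coeff a j) (p ^ j)) (p ^ i))"
    by (rule sum.mono_neutral_right) (use assms in \<open>auto simp: coeff_monom power_inject_exp\<close>)
  finally show ?thesis by simp
qed

lemma lin_inj:
  assumes "p > 1" "lin_assoc p a = lin_assoc p b"
  shows "a = b"
  by (rule poly_eqI) (metis assms coeff_lin)

lemma pcompose_monom: "pcompose (monom c m) Q = smult c (Q ^ m)"
proof (induction m)
  case 0 then show ?case by (simp add: monom_0)
next
  case (Suc m)
  have "monom c (Suc m) = pCons 0 (monom c m)" by (simp add: monom_Suc)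
  then show ?case using Suc by (simp add: pcompose_pCons)
qed

context
  fixes p :: nat
  assumes cp: "CHAR('a::field) = p" and pp: "prime p" and fixc: "\<And>c::'a. c ^ p = c"
begin

lemma frob_lin: "(lin_assoc p (a::'a poly)) ^ p = lin_assoc p (monom 1 1 * a)"
proof -
  have cpp: "CHAR('a poly) = p" using cp by simp
  have "(lin_assoc p a) ^ p = (\<Sum>i\<le>degree a. monom (coeff a i) (p ^ i) ^ p)"
    unfolding lin_assoc_def by (rule freshmans_dream_sum) (use cpp pp in auto)
  also have "\<dots> = (\<Sum>i\<le>degree a. monom (coeff a i) (p ^ Suc i))"
    by (simp add: monom_power fixc mult.commute)
  also have "\<dots> = lin_assoc p (monom 1 1 * a)"
  proof -
    have "degree (monom 1 1 * a) \<le> Suc (degree a)"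
      by (metis degree_mult_le degree_monom_le add_le_mono le_refl order_trans plus_1_eq_Suc)
    then have "lin_assoc p (monom 1 1 * a) = (\<Sum>i\<le>Suc (degree a). monom (coeff (monom 1 1 * a) i) (p ^ i))"
      by (rule lin_bound)
    also have "\<dots> = (\<Sum>i\<le>degree a. monom (coeff a i) (p ^ Suc i))"
      by (subst sum.atMost_Suc_shift) (simp add: coeff_monom_mult)
    finally show ?thesis by simp
  qed
  finally show ?thesis .
qed

lemma lin_Xpow: "lin_assoc p (monom 1 i * (b::'a poly)) = (lin_assoc p b) ^ (p ^ i)"
proof (induction i)
  case 0 then show ?case by (simp add: monom_0 one_pCons[symmetric])
next
  case (Suc i)
  have h: "monom (1::'a) (Suc i) * b = monom 1 1 * (monom 1 i * b)"
    by (metis mult.assoc mult_monom mult_1 plus_1_eq_Suc)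
  then have "lin_assoc p (monom 1 (Suc i) * b) = (lin_assoc p (monom 1 i * b)) ^ p"
    by (simp only: h frob_lin)
  then show ?case using Suc by (simp add: power_mult[symmetric] mult.commute)
qed

lemma lin_mult: "lin_assoc p ((a::'a poly) * b) = pcompose (lin_assoc p a) (lin_assoc p b)"
proof -
  have m: "lin_assoc p (monom c i * b) = pcompose (lin_assoc p (monom c i)) (lin_assoc p b)" for c i
  proof -
    have "monom c i * b = smult c (monom 1 i * b)" by (simp add: smult_monom_mult)
    then show ?thesis by (simp add: lin_smult lin_Xpow lin_monom pcompose_monom)
  qed
  have "a * b = (\<Sum>i\<le>degree a. monom (coeff a i) i * b)"
    by (subst (1) poly_as_sum_of_monoms[symmetric]) (simp add: sum_distrib_right)
  then have "lin_assoc p (a * b) = (\<Sum>i\<le>degree a. pcompose (lin_assoc p (monom (coeff a i) i)) (lin_assoc p b))"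
    by (simp add: lin_sum m)
  also have "\<dots> = pcompose (lin_assoc p (\<Sum>i\<le>degree a. monom (coeff a i) i)) (lin_assoc p b)"
    by (simp add: lin_sum pcompose_sum)
  finally show ?thesis by (simp add: poly_as_sum_of_monoms)
qed

end

lemma coeff_conv: "coeff (conv_assoc p L) i = (if i \<le> degree L then coeff L (p ^ i) else 0)"
  unfolding conv_assoc_def by (simp add: coeff_sum coeff_monom)

lemma coeff_lin_nonpow:
  assumes "\<forall>i. j \<noteq> p ^ i"
  shows "coeff (lin_assoc p a) j = 0"
  unfolding lin_assoc_def using assms by (auto simp: coeff_sum coeff_monom intro!: sum.neutral)

lemma lin_conv:
  assumes "p > 1" "is_linearized p L"
  shows "lin_assoc p (conv_assoc p L) = L"
proof (rule poly_eqI)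
  fix j
  show "coeff (lin_assoc p (conv_assoc p L)) j = coeff L j"
  proof (cases "\<exists>i. j = p ^ i")
    case True
    then obtain i where j: "j = p ^ i" by blast
    have "(2::nat) ^ i \<le> p ^ i" using assms(1) by (simp add: power_mono)
    then have "i < p ^ i" using less_exp[of i] by linarith
    moreover have "i > degree L \<Longrightarrow> coeff L (p ^ i) = 0"
      using calculation by (intro coeff_eq_0) simp
    ultimately show ?thesis using j assms(1) by (auto simp: coeff_lin coeff_conv)
  next
    case False
    then show ?thesis using assms(2) coeff_lin_nonpow[of j p]
      unfolding is_linearized_def by metis
  qed
qed

lemma S_lin_eq:
  assumes "k > 0"
  shows "S_lin p k (2 * k) = lin_assoc p (1 - monom 1 k)"
proof -
  have h: "1 - monom (1::'a) k = monom 1 0 + monom (-1) k"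
    by (simp add: monom_0 one_pCons minus_monom[symmetric])
  have "lin_assoc p (1 - monom (1::'a) k) = monom 1 (p ^ 0) + monom (-1) (p ^ k)"
    by (simp only: h lin_add lin_monom)
  then show ?thesis using assms
    by (simp add: S_lin_def numeral_2_eq_2 lessThan_Suc add.commute)
qed

lemma t_conv_eq:
  assumes "d > 0" "d dvd k"
  shows "(1 - monom 1 d) * t_conv d k = (1 - monom (1::'a::comm_ring_1) k)"
proof -
  have "t_conv d k = (\<Sum>i<k div d. (monom (1::'a) d) ^ i)"
    unfolding t_conv_def by (simp add: monom_power mult.commute)
  then have "(1 - monom 1 d) * t_conv d k = 1 - (monom (1::'a) d) ^ (k div d)"
    by (simp add: one_diff_power_eq)
  also have "\<dots> = 1 - monom 1 k" using assms by (simp add: monom_power)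
  finally show ?thesis .
qed

theorem proposition3:
  fixes p n k d :: nat
    and L L' :: "'a::field_gcd poly"
  assumes "prime p" and "CARD('a) = p"
    and "n > 0" and "k > 0" and "d = gcd n k"
    and "is_linearized p L" and "no_multiple_roots L"
    and "is_linearized p L'"
    and "S_lin p k (2 * k) = pcompose L L'"
  shows "let l' = conv_assoc p L'; w = gcd l' (t_conv d k);
             u = l' div w; v = t_conv d k div w
         in pcompose (lin_assoc p u) L = pcompose (S_lin p d (2 * d)) (lin_assoc p v)"
proof -
  have p1: "p > 1" using assms(1) prime_gt_1_nat by blast
  have cp: "CHAR('a) = p" by (rule card_char) (use assms in auto)
  have fx: "\<And>c::'a. c ^ p = c" by (rule card_pow) (use assms in auto)
  have d0: "d > 0" "d dvd k" using assms(4,5) by auto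
  define l where "l = conv_assoc p L"
  define l' where "l' = conv_assoc p L'"
  define t where "t = (t_conv d k :: 'a poly)"
  define w where "w = gcd l' t"
  define u where "u = l' div w"
  define v where "v = t div w"
  have L: "lin_assoc p l = L" unfolding l_def by (rule lin_conv) (use p1 assms in auto)
  have L': "lin_assoc p l' = L'" unfolding l'_def by (rule lin_conv) (use p1 assms in auto)
  have LM: "lin_assoc p (a * b) = pcompose (lin_assoc p a) (lin_assoc p b)" for a b :: "'a poly"
    by (rule lin_mult[OF cp assms(1) fx])
  have "lin_assoc p (1 - monom 1 k) = S_lin p k (2 * k)"
    by (rule S_lin_eq[OF assms(4), symmetric])
  also have "\<dots> = lin_assoc p (l * l')" using assms(9) by (simp add: LM L L')
  finally have "lin_assoc p (1 - monom 1 k) = lin_assoc p (l * l')" .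
  then have ll: "l * l' = 1 - monom 1 k" using lin_inj[OF p1] by metis
  have tt: "(1 - monom 1 d) * t = 1 - monom 1 k" unfolding t_def by (rule t_conv_eq[OF d0])
  have "t \<noteq> 0"
  proof
    assume "t = 0"
    then have "1 - monom (1::'a) k = 0" using tt by simp
    then have "coeff (1 - monom (1::'a) k) 0 = 0" by simp
    then show False using assms(4) by simp
  qed
  then have w0: "w \<noteq> 0" unfolding w_def by simp
  have wu: "l' = u * w" unfolding u_def w_def by simp
  have wv: "t = v * w" unfolding v_def w_def by simp
  have "(u * l) * w = ((1 - monom 1 d) * v) * w"
  proof -
    have "(u * l) * w = l * l'" using wu by (simp add: mult_ac)
    also have "\<dots> = (1 - monom 1 d) * t" using ll tt by simp
    also have "\<dots> = ((1 - monom 1 d) * v) * w" using wv by (simp add: mult_ac)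
    finally show ?thesis .
  qed
  then have eq: "u * l = (1 - monom 1 d) * v" using w0 by simp
  have "pcompose (lin_assoc p u) L = lin_assoc p (u * l)" by (simp add: LM L)
  also have "\<dots> = pcompose (S_lin p d (2 * d)) (lin_assoc p v)"
    by (simp add: eq LM S_lin_eq[OF d0(1)])
  finally show ?thesis
    unfolding Let_def u_def v_def w_def l'_def t_def .
qed

end
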